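(* Let $X$ be a nonempty set and $G\le S_X$. If $G$ is rack admissible then $\bigcup_{x\in X/G}(C_G(G_x))^G$ generates $G$. If $G$ is quandle admissible then $\bigcup_{x\in X/G}Z(G_x)^G$ generates $G$.
   Context: Permutations act on the right; for a subset $H\subseteq G$ and $g\in G$, $H^g=g^{-1}Hg$ and $H^G=\bigcup_{g\in G}H^g$. For $G\le S_X$, $G_x$ is the stabilizer of $x$, and $X/G$ a complete set of orbit representatives; $C_G(H)$ is the centralizer and $Z(H)$ the center. A rack is a groupoid $(X,* )$ whose left translations $L_x$ ($y\mapsto x*y$) are bijections and which satisfies $x*(y*z)=(x*y)*(x*z)$; a quandle is a rack with $x*x=x$. $\mathrm{LMlt}(X,* )=\langle L_x:x\in X\rangle$. A subgroup $G\le S_X$ is rack admissible (resp. quandle admissible) if there is a rack (resp. quandle) $(X,* )$ with $\mathrm{LMlt}(X,* )=G$. *)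

theory Defs
  imports "HOL-Algebra.Algebra"
begin

text \<open>Permutations of Y are the elements of BijGroup Y (extensional bijections of Y).
  The action of g on x is g x.\<close>

definition is_rack :: "'a set \<Rightarrow> ('a \<Rightarrow> 'a \<Rightarrow> 'a) \<Rightarrow> bool" where
  "is_rack Y rk \<longleftrightarrow>
     (\<forall>x\<in>Y. \<forall>y\<in>Y. rk x y \<in> Y) \<and>
     (\<forall>x\<in>Y. bij_betw (rk x) Y Y) \<and>
     (\<forall>x\<in>Y. \<forall>y\<in>Y. \<forall>z\<in>Y. rk x (rk y z) = rk (rk x y) (rk x z))"

definition is_quandle :: "'a set \<Rightarrow> ('a \<Rightarrow> 'a \<Rightarrow> 'a) \<Rightarrow> bool" where
  "is_quandle Y rk \<longleftrightarrow> is_rack Y rk \<and> (\<forall>x\<in>Y. rk x x = x)"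

definition left_transl :: "'a set \<Rightarrow> ('a \<Rightarrow> 'a \<Rightarrow> 'a) \<Rightarrow> 'a \<Rightarrow> ('a \<Rightarrow> 'a)" where
  "left_transl Y rk x = restrict (rk x) Y"

definition LMlt :: "'a set \<Rightarrow> ('a \<Rightarrow> 'a \<Rightarrow> 'a) \<Rightarrow> ('a \<Rightarrow> 'a) set" where
  "LMlt Y rk = generate (BijGroup Y) (left_transl Y rk ` Y)"

definition rack_admissible :: "'a set \<Rightarrow> ('a \<Rightarrow> 'a) set \<Rightarrow> bool" where
  "rack_admissible Y G \<longleftrightarrow> (\<exists>rk. is_rack Y rk \<and> LMlt Y rk = G)"

definition quandle_admissible :: "'a set \<Rightarrow> ('a \<Rightarrow> 'a) set \<Rightarrow> bool" where
  "quandle_admissible Y G \<longleftrightarrow> (\<exists>rk. is_quandle Y rk \<and> LMlt Y rk = G)"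

definition perm_stabilizer :: "'a set \<Rightarrow> ('a \<Rightarrow> 'a) set \<Rightarrow> 'a \<Rightarrow> ('a \<Rightarrow> 'a) set" where
  "perm_stabilizer Y G x = {g \<in> G. g x = x}"

definition perm_centralizer :: "'a set \<Rightarrow> ('a \<Rightarrow> 'a) set \<Rightarrow> ('a \<Rightarrow> 'a) set \<Rightarrow> ('a \<Rightarrow> 'a) set" where
  "perm_centralizer Y G H =
     {g \<in> G. \<forall>h\<in>H. g \<otimes>\<^bsub>BijGroup Y\<^esub> h = h \<otimes>\<^bsub>BijGroup Y\<^esub> g}"

definition perm_center :: "'a set \<Rightarrow> ('a \<Rightarrow> 'a) set \<Rightarrow> ('a \<Rightarrow> 'a) set" where
  "perm_center Y H = {h \<in> H. \<forall>k\<in>H. h \<otimes>\<^bsub>BijGroup Y\<^esub> k = k \<otimes>\<^bsub>BijGroup Y\<^esub> h}"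

definition conj_closure :: "'a set \<Rightarrow> ('a \<Rightarrow> 'a) set \<Rightarrow> ('a \<Rightarrow> 'a) set \<Rightarrow> ('a \<Rightarrow> 'a) set" where
  "conj_closure Y G H =
     {inv\<^bsub>BijGroup Y\<^esub> g \<otimes>\<^bsub>BijGroup Y\<^esub> h \<otimes>\<^bsub>BijGroup Y\<^esub> g | g h. g \<in> G \<and> h \<in> H}"

definition orbit_reps :: "'a set \<Rightarrow> ('a \<Rightarrow> 'a) set \<Rightarrow> 'a set \<Rightarrow> bool" where
  "orbit_reps Y G R \<longleftrightarrow> R \<subseteq> Y \<and> (\<forall>x\<in>Y. \<exists>!r. r \<in> R \<and> (\<exists>g\<in>G. g r = x))"

end

theory Submission
  imports Defs
begin

lemma L_carrier:
  assumes "is_rack Y rk" "x \<in> Y"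
  shows "left_transl Y rk x \<in> carrier (BijGroup Y)"
proof -
  have "bij_betw (rk x) Y Y" using assms unfolding is_rack_def by blast
  then have "bij_betw (restrict (rk x) Y) Y Y"
    by (metis bij_betw_cong restrict_apply')
  then show ?thesis unfolding left_transl_def BijGroup_def Bij_def by simp
qed

lemma mult_apply:
  assumes "f \<in> carrier (BijGroup Y)" "g \<in> carrier (BijGroup Y)" "x \<in> Y"
  shows "(f \<otimes>\<^bsub>BijGroup Y\<^esub> g) x = f (g x)"
  using assms by (simp add: BijGroup_def compose_def)

lemma carrier_maps:
  assumes "f \<in> carrier (BijGroup Y)" "x \<in> Y"
  shows "f x \<in> Y"
  using assms by (auto simp: BijGroup_def Bij_def bij_betw_def)

lemma carrier_eqI:
  assumes "f \<in> carrier (BijGroup Y)" "g \<in> carrier (BijGroup Y)" "\<And>x. x \<in> Y \<Longrightarrow> f x = g x"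
  shows "f = g"
  using assms by (auto simp: BijGroup_def Bij_def intro: extensionalityI)

lemma incl_case:
  assumes r: "is_rack Y rk" and z: "z \<in> Y" and x: "x \<in> Y"
  shows "left_transl Y rk z \<otimes>\<^bsub>BijGroup Y\<^esub> left_transl Y rk x
       = left_transl Y rk (left_transl Y rk z x) \<otimes>\<^bsub>BijGroup Y\<^esub> left_transl Y rk z"
proof -
  have zx: "rk z x \<in> Y" using r z x unfolding is_rack_def by blast
  have "left_transl Y rk z x = rk z x" using x by (simp add: left_transl_def)
  moreover have "left_transl Y rk z \<otimes>\<^bsub>BijGroup Y\<^esub> left_transl Y rk x
       = left_transl Y rk (rk z x) \<otimes>\<^bsub>BijGroup Y\<^esub> left_transl Y rk z"
  proof (rule carrier_eqI)
    fix w assume w: "w \<in> Y"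
    have xw: "rk x w \<in> Y" "rk z w \<in> Y" using r x z w unfolding is_rack_def by blast+
    show "(left_transl Y rk z \<otimes>\<^bsub>BijGroup Y\<^esub> left_transl Y rk x) w
       = (left_transl Y rk (rk z x) \<otimes>\<^bsub>BijGroup Y\<^esub> left_transl Y rk z) w"
      unfolding mult_apply[OF L_carrier[OF r z] L_carrier[OF r x] w]
          mult_apply[OF L_carrier[OF r zx] L_carrier[OF r z] w]
    proof -
      have "rk z (rk x w) = rk (rk z x) (rk z w)" using r x z w unfolding is_rack_def by blast
      then show "left_transl Y rk z (left_transl Y rk x w) = left_transl Y rk (rk z x) (left_transl Y rk z w)"
        using x z w zx xw by (simp add: left_transl_def)
    qed
  qed (use r z x zx in \<open>simp_all add: L_carrier monoid.m_closed[OF group.is_monoid[OF group_BijGroup]]\<close>)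
  ultimately show ?thesis by simp
qed

lemma key:
  assumes r: "is_rack Y rk" and g: "g \<in> generate (BijGroup Y) (left_transl Y rk ` Y)"
  shows "\<forall>x\<in>Y. g \<otimes>\<^bsub>BijGroup Y\<^esub> left_transl Y rk x
       = left_transl Y rk (g x) \<otimes>\<^bsub>BijGroup Y\<^esub> g"
  using g
proof (induction rule: generate.induct)
  case one
  interpret B: group "BijGroup Y" by (rule group_BijGroup)
  have "\<one>\<^bsub>BijGroup Y\<^esub> x = x" if "x \<in> Y" for x using that by (simp add: BijGroup_def)
  then show ?case using L_carrier[OF r] by simp
next
  case (incl h)
  then show ?case using incl_case[OF r] by auto
next
  case (inv h)
  then obtain z where z: "z \<in> Y" and h: "h = left_transl Y rk z" by auto
  interpret B: group "BijGroup Y" by (rule group_BijGroup)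
  have Lz: "h \<in> carrier (BijGroup Y)" using L_carrier[OF r z] h by simp
  show ?case
  proof
    fix x assume x: "x \<in> Y"
    define y where "y = (inv\<^bsub>BijGroup Y\<^esub> h) x"
    have ic: "inv\<^bsub>BijGroup Y\<^esub> h \<in> carrier (BijGroup Y)" using Lz by simp
    have y: "y \<in> Y" using carrier_maps[OF ic x] y_def by simp
    have one_x: "\<one>\<^bsub>BijGroup Y\<^esub> x = x" using x by (simp add: BijGroup_def)
    have hy: "h y = x"
      using mult_apply[OF Lz ic x] B.r_inv[OF Lz] one_x unfolding y_def by metis
    have eq: "h \<otimes>\<^bsub>BijGroup Y\<^esub> left_transl Y rk y = left_transl Y rk x \<otimes>\<^bsub>BijGroup Y\<^esub> h"
      using incl_case[OF r z y] hy h by simp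
    have Ly: "left_transl Y rk y \<in> carrier (BijGroup Y)" using L_carrier[OF r y] .
    have Lx: "left_transl Y rk x \<in> carrier (BijGroup Y)" using L_carrier[OF r x] .
    have "left_transl Y rk y \<otimes>\<^bsub>BijGroup Y\<^esub> inv\<^bsub>BijGroup Y\<^esub> h
        = inv\<^bsub>BijGroup Y\<^esub> h \<otimes>\<^bsub>BijGroup Y\<^esub> (h \<otimes>\<^bsub>BijGroup Y\<^esub> left_transl Y rk y) \<otimes>\<^bsub>BijGroup Y\<^esub> inv\<^bsub>BijGroup Y\<^esub> h"
      using Lz Ly ic by (simp only: B.m_assoc[symmetric] B.l_inv B.l_one)
    also have "\<dots> = inv\<^bsub>BijGroup Y\<^esub> h \<otimes>\<^bsub>BijGroup Y\<^esub> left_transl Y rk x"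
      using Lz Lx ic eq by (simp only: eq B.m_assoc B.r_inv B.r_one B.m_closed)
    finally show "inv\<^bsub>BijGroup Y\<^esub> h \<otimes>\<^bsub>BijGroup Y\<^esub> left_transl Y rk x
       = left_transl Y rk ((inv\<^bsub>BijGroup Y\<^esub> h) x) \<otimes>\<^bsub>BijGroup Y\<^esub> inv\<^bsub>BijGroup Y\<^esub> h"
      by (simp add: y_def)
  qed
next
  case (eng h1 h2)
  interpret B: group "BijGroup Y" by (rule group_BijGroup)
  have sub: "left_transl Y rk ` Y \<subseteq> carrier (BijGroup Y)" using L_carrier[OF r] by auto
  have c1: "h1 \<in> carrier (BijGroup Y)" using B.generate_in_carrier[OF sub eng(1)] .
  have c2: "h2 \<in> carrier (BijGroup Y)" using B.generate_in_carrier[OF sub eng(2)] .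
  show ?case
  proof
    fix x assume x: "x \<in> Y"
    have h2x: "h2 x \<in> Y" using carrier_maps[OF c2 x] .
    have "h1 \<otimes>\<^bsub>BijGroup Y\<^esub> h2 \<otimes>\<^bsub>BijGroup Y\<^esub> left_transl Y rk x
        = h1 \<otimes>\<^bsub>BijGroup Y\<^esub> (left_transl Y rk (h2 x) \<otimes>\<^bsub>BijGroup Y\<^esub> h2)"
      using eng.IH(2) x c1 c2 L_carrier[OF r x] by (simp add: B.m_assoc)
    also have "\<dots> = left_transl Y rk (h1 (h2 x)) \<otimes>\<^bsub>BijGroup Y\<^esub> h1 \<otimes>\<^bsub>BijGroup Y\<^esub> h2"
      using eng.IH(1) h2x c1 c2 L_carrier[OF r h2x] by (simp add: B.m_assoc[symmetric])
    finally show "h1 \<otimes>\<^bsub>BijGroup Y\<^esub> h2 \<otimes>\<^bsub>BijGroup Y\<^esub> left_transl Y rk x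
       = left_transl Y rk ((h1 \<otimes>\<^bsub>BijGroup Y\<^esub> h2) x) \<otimes>\<^bsub>BijGroup Y\<^esub> (h1 \<otimes>\<^bsub>BijGroup Y\<^esub> h2)"
      using mult_apply[OF c1 c2 x] c1 c2 L_carrier[OF r carrier_maps[OF c2 h2x]] L_carrier[OF r carrier_maps[OF c1 h2x]] by (simp add: B.m_assoc)
  qed
qed


lemma gen_lemma:
  assumes r: "is_rack Y rk"
    and sg: "subgroup G (BijGroup Y)"
    and G: "G = generate (BijGroup Y) (left_transl Y rk ` Y)"
    and R: "orbit_reps Y G R"
    and HG: "\<And>x. x \<in> R \<Longrightarrow> H x \<subseteq> G"
    and LH: "\<And>x. x \<in> R \<Longrightarrow> left_transl Y rk x \<in> H x"
  shows "generate (BijGroup Y) (\<Union>x\<in>R. conj_closure Y G (H x)) = G"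
proof -
  interpret B: group "BijGroup Y" by (rule group_BijGroup)
  let ?S = "\<Union>x\<in>R. conj_closure Y G (H x)"
  have GC: "G \<subseteq> carrier (BijGroup Y)" using subgroup.subset[OF sg] .
  have SG: "?S \<subseteq> G"
  proof
    fix s assume "s \<in> ?S"
    then obtain x g h where x: "x \<in> R" and g: "g \<in> G" and h: "h \<in> H x"
      and s: "s = inv\<^bsub>BijGroup Y\<^esub> g \<otimes>\<^bsub>BijGroup Y\<^esub> h \<otimes>\<^bsub>BijGroup Y\<^esub> g"
      unfolding conj_closure_def by blast
    have hG: "h \<in> G" using HG[OF x] h by blast
    show "s \<in> G" unfolding s
      using g hG subgroup.m_closed[OF sg] subgroup.m_inv_closed[OF sg] by blast
  qed
  have SC: "?S \<subseteq> carrier (BijGroup Y)" using SG GC by blast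
  have "generate (BijGroup Y) ?S \<subseteq> G" by (rule B.generate_subgroup_incl[OF SG sg])
  moreover have "G \<subseteq> generate (BijGroup Y) ?S"
  proof -
    have "left_transl Y rk ` Y \<subseteq> generate (BijGroup Y) ?S"
    proof
      fix l assume "l \<in> left_transl Y rk ` Y"
      then obtain y where y: "y \<in> Y" and l: "l = left_transl Y rk y" by blast
      obtain x g where x: "x \<in> R" and g: "g \<in> G" and gx: "g x = y"
        using R y unfolding orbit_reps_def by metis
      have xY: "x \<in> Y" using R x unfolding orbit_reps_def by blast
      have gC: "g \<in> carrier (BijGroup Y)" using g GC by blast
      have Lx: "left_transl Y rk x \<in> carrier (BijGroup Y)" using L_carrier[OF r xY] .
      have Ly: "left_transl Y rk y \<in> carrier (BijGroup Y)" using L_carrier[OF r y] .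
      have eq: "g \<otimes>\<^bsub>BijGroup Y\<^esub> left_transl Y rk x = left_transl Y rk y \<otimes>\<^bsub>BijGroup Y\<^esub> g"
        using key[OF r, of g] g G xY gx by auto
      have "left_transl Y rk y = left_transl Y rk y \<otimes>\<^bsub>BijGroup Y\<^esub> g \<otimes>\<^bsub>BijGroup Y\<^esub> inv\<^bsub>BijGroup Y\<^esub> g"
        using Ly gC by (simp add: B.m_assoc B.r_inv)
      also have "\<dots> = inv\<^bsub>BijGroup Y\<^esub> (inv\<^bsub>BijGroup Y\<^esub> g) \<otimes>\<^bsub>BijGroup Y\<^esub> left_transl Y rk x \<otimes>\<^bsub>BijGroup Y\<^esub> inv\<^bsub>BijGroup Y\<^esub> g"
        using gC by (simp only: eq[symmetric] B.inv_inv)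
      finally have "l \<in> conj_closure Y G (H x)"
        unfolding conj_closure_def l
        using subgroup.m_inv_closed[OF sg g] LH[OF x] by blast
      then show "l \<in> generate (BijGroup Y) ?S" using x by (blast intro: generate.incl)
    qed
    then have "generate (BijGroup Y) (left_transl Y rk ` Y) \<subseteq> generate (BijGroup Y) ?S"
      by (rule B.generate_subgroup_incl[OF _ B.generate_is_subgroup[OF SC]])
    then show ?thesis using G by simp
  qed
  ultimately show ?thesis by blast
qed

lemma comm_stab:
  assumes r: "is_rack Y rk" and x: "x \<in> Y"
    and h: "h \<in> generate (BijGroup Y) (left_transl Y rk ` Y)" and hx: "h x = x"
  shows "left_transl Y rk x \<otimes>\<^bsub>BijGroup Y\<^esub> h = h \<otimes>\<^bsub>BijGroup Y\<^esub> left_transl Y rk x"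
  using key[OF r h] x hx by simp

theorem proposition3p7:
  fixes Y :: "'a set" and G :: "('a \<Rightarrow> 'a) set" and R :: "'a set"
  assumes "Y \<noteq> {}"
    and "subgroup G (BijGroup Y)"
    and "orbit_reps Y G R"
  shows "(rack_admissible Y G \<longrightarrow>
           generate (BijGroup Y)
             (\<Union>x\<in>R. conj_closure Y G (perm_centralizer Y G (perm_stabilizer Y G x))) = G)
       \<and> (quandle_admissible Y G \<longrightarrow>
           generate (BijGroup Y)
             (\<Union>x\<in>R. conj_closure Y G (perm_center Y (perm_stabilizer Y G x))) = G)"
proof (intro conjI impI)
  assume "rack_admissible Y G"
  then obtain rk where r: "is_rack Y rk" and G: "LMlt Y rk = G"
    unfolding rack_admissible_def by blast
  have G': "G = generate (BijGroup Y) (left_transl Y rk ` Y)" using G by (simp add: LMlt_def)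
  have RY: "R \<subseteq> Y" using assms(3) unfolding orbit_reps_def by blast
  show "generate (BijGroup Y)
             (\<Union>x\<in>R. conj_closure Y G (perm_centralizer Y G (perm_stabilizer Y G x))) = G"
  proof (rule gen_lemma[OF r assms(2) G' assms(3)])
    fix x assume "x \<in> R"
    then show "perm_centralizer Y G (perm_stabilizer Y G x) \<subseteq> G"
      unfolding perm_centralizer_def by blast
  next
    fix x assume xR: "x \<in> R"
    then have x: "x \<in> Y" using RY by blast
    have LG: "left_transl Y rk x \<in> G" using x G' by (blast intro: generate.incl)
    show "left_transl Y rk x \<in> perm_centralizer Y G (perm_stabilizer Y G x)"
      unfolding perm_centralizer_def perm_stabilizer_def
      using LG comm_stab[OF r x] G' by auto
  qed
next
  assume "quandle_admissible Y G"
  then obtain rk where q: "is_quandle Y rk" and G: "LMlt Y rk = G"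
    unfolding quandle_admissible_def by blast
  have r: "is_rack Y rk" using q unfolding is_quandle_def by blast
  have G': "G = generate (BijGroup Y) (left_transl Y rk ` Y)" using G by (simp add: LMlt_def)
  have RY: "R \<subseteq> Y" using assms(3) unfolding orbit_reps_def by blast
  show "generate (BijGroup Y)
             (\<Union>x\<in>R. conj_closure Y G (perm_center Y (perm_stabilizer Y G x))) = G"
  proof (rule gen_lemma[OF r assms(2) G' assms(3)])
    fix x assume "x \<in> R"
    then show "perm_center Y (perm_stabilizer Y G x) \<subseteq> G"
      unfolding perm_center_def perm_stabilizer_def by blast
  next
    fix x assume xR: "x \<in> R"
    then have x: "x \<in> Y" using RY by blast
    have LG: "left_transl Y rk x \<in> G" using x G' by (blast intro: generate.incl)
    have Lxx: "left_transl Y rk x x = x" using q x unfolding is_quandle_def left_transl_def by simp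
    show "left_transl Y rk x \<in> perm_center Y (perm_stabilizer Y G x)"
      unfolding perm_center_def perm_stabilizer_def
      using LG Lxx comm_stab[OF r x] G' by auto
  qed
qed

end
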